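(* Let $p\ge 2$ and let $\mathbb{F}_p$ be a binary floating-point format with unit roundoff $u=2^{-p}$. Let $t\ge1$ and $s_A,s_B\ge1$ be integers, and let $A\in\mathbb{F}_p^{m\times k}$, $B\in\mathbb{F}_p^{k\times n}$ have all entries nonzero. With the scale factors $\alpha,\beta$ and integer slices $A_{(\ell)}$, $B^{(h)}$ defined in the context, let $$C'=\alpha\beta^T\circ\sum_{\substack{1\le\ell\le s_A,\ 1\le h\le s_B\\ \ell+h\le\max(s_A,s_B)+1}}2^{-(\ell+h)t}A_{(\ell)}B^{(h)},$$ a sum of $\chi(s_A,s_B)=s_m(2s_M-s_m+1)/2$ matrices, where $s_M=\max(s_A,s_B)$, $s_m=\min(s_A,s_B)$. Suppose $\hat C'$ is computed by forming each such product $A_{(\ell)}B^{(h)}$ exactly, converting it exactly to $\mathbb{F}_p$ and scaling it exactly by $2^{-(\ell+h)t}$ and $\alpha\beta^T$, and adding the resulting $\psi=\chi(s_A,s_B)$ matrices entrywise in floating-point arithmetic (in any order) satisfying $\mathrm{fl}(x+y)=(x+y)(1+\delta)$, $|\delta|\le u$, with no overflow or underflow, and $\psi u<1$. Then, entrywise: if $s_A\le s_B$, $$|AB-\hat C'|\le\bigl(\zeta_{A,B}+2^{-s_Bt}s_A\kappa_A\kappa_B+\gamma_\psi(1+\zeta_{A,B}+2^{-s_Bt}s_A\kappa_A\kappa_B)\bigr)|A|\,|B|,$$ and if $s_A>s_B$, $$|AB-\hat C'|\le\bigl(\zeta_{A,B}+2^{-s_At}s_B\kappa_A\kappa_B+\gamma_\psi(1+\zeta_{A,B}+2^{-s_At}s_B\kappa_A\kappa_B)\bigr)|A|\,|B|,$$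 where $\zeta_{A,B}=2^{-s_At}\kappa_A+2^{-s_Bt}\kappa_B+2^{-(s_A+s_B)t}\kappa_A\kappa_B$ and $\gamma_j=ju/(1-ju)$.
   Context: Absolute values of matrices and inequalities between matrices are entrywise; $\circ$ is the Hadamard product. For $x\in\mathbb{R}$, $[x]$ denotes truncation toward zero. Scale factors: $\alpha_i$ is the smallest power of two strictly larger than $\max_{1\le j\le k}|a_{ij}|$, and $\beta_j$ is the smallest power of two strictly larger than $\max_{1\le i\le k}|b_{ij}|$. Slices: $A_{(\ell)}=\bigl[2^{\ell t}\bigl(\mathrm{diag}(\alpha)^{-1}A-\sum_{r=1}^{\ell-1}2^{-rt}A_{(r)}\bigr)\bigr]$ for $\ell=1,\dots,s_A$, and $B^{(h)}=\bigl[2^{ht}\bigl(B\,\mathrm{diag}(\beta)^{-1}-\sum_{r=1}^{h-1}2^{-rt}B^{(r)}\bigr)\bigr]$ for $h=1,\dots,s_B$, applied entrywise. Scaling measures: $\kappa_A=2\max_i\frac{\max_j|a_{ij}|}{\min_j|a_{ij}|}$ and $\kappa_B=2\max_j\frac{\max_i|b_{ij}|}{\min_i|b_{ij}|}$. *)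

theory Defs
  imports Complex_Main "HOL-Library.Multiset"
begin

text \<open>Binary floating-point format with precision p (unit roundoff 2^-p),
  unbounded exponent range (no overflow / underflow).\<close>
definition Fp :: "nat \<Rightarrow> real set" where
  "Fp p = {x. \<exists>(M::int) (e::int). x = real_of_int M * 2 powr real_of_int e \<and> \<bar>M\<bar> < 2 ^ p}"

definition trunc0 :: "real \<Rightarrow> real" where
  "trunc0 x = (if x \<ge> 0 then real_of_int \<lfloor>x\<rfloor> else real_of_int \<lceil>x\<rceil>)"

definition pow2_above :: "real \<Rightarrow> real" where
  "pow2_above y = (LEAST z. y < z \<and> (\<exists>e::int. z = 2 powr real_of_int e))"

definition alpha :: "nat \<Rightarrow> (nat \<Rightarrow> nat \<Rightarrow> real) \<Rightarrow> nat \<Rightarrow> real" where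
  "alpha k A i = pow2_above (Max {\<bar>A i j\<bar> | j. j < k})"

definition beta :: "nat \<Rightarrow> (nat \<Rightarrow> nat \<Rightarrow> real) \<Rightarrow> nat \<Rightarrow> real" where
  "beta k B j = pow2_above (Max {\<bar>B i j\<bar> | i. i < k})"

function slc :: "nat \<Rightarrow> real \<Rightarrow> nat \<Rightarrow> real" where
  "slc t x l = (if l = 0 then 0 else
     trunc0 (2 ^ (l * t) * (x - (\<Sum>r\<in>{1..<l}. slc t x r / 2 ^ (r * t)))))"
  by auto
termination by (relation "measure (\<lambda>(t, x, l). l)") auto

definition sliceA :: "nat \<Rightarrow> nat \<Rightarrow> (nat \<Rightarrow> nat \<Rightarrow> real) \<Rightarrow> nat \<Rightarrow> nat \<Rightarrow> nat \<Rightarrow> real" where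
  "sliceA t k A l i j = slc t (A i j / alpha k A i) l"

definition sliceB :: "nat \<Rightarrow> nat \<Rightarrow> (nat \<Rightarrow> nat \<Rightarrow> real) \<Rightarrow> nat \<Rightarrow> nat \<Rightarrow> nat \<Rightarrow> real" where
  "sliceB t k B h i j = slc t (B i j / beta k B j) h"

definition matmul :: "nat \<Rightarrow> (nat \<Rightarrow> nat \<Rightarrow> real) \<Rightarrow> (nat \<Rightarrow> nat \<Rightarrow> real) \<Rightarrow> nat \<Rightarrow> nat \<Rightarrow> real" where
  "matmul k A B i j = (\<Sum>q<k. A i q * B q j)"

definition kappaA :: "nat \<Rightarrow> nat \<Rightarrow> (nat \<Rightarrow> nat \<Rightarrow> real) \<Rightarrow> real" where
  "kappaA m k A = 2 * Max {Max {\<bar>A i j\<bar> | j. j < k} / Min {\<bar>A i j\<bar> | j. j < k} | i. i < m}"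

definition kappaB :: "nat \<Rightarrow> nat \<Rightarrow> (nat \<Rightarrow> nat \<Rightarrow> real) \<Rightarrow> real" where
  "kappaB k n B = 2 * Max {Max {\<bar>B i j\<bar> | i. i < k} / Min {\<bar>B i j\<bar> | i. i < k} | j. j < n}"

definition slice_pairs :: "nat \<Rightarrow> nat \<Rightarrow> (nat \<times> nat) set" where
  "slice_pairs sA sB = {(l, h). 1 \<le> l \<and> l \<le> sA \<and> 1 \<le> h \<and> h \<le> sB \<and> l + h \<le> max sA sB + 1}"

definition chi :: "nat \<Rightarrow> nat \<Rightarrow> nat" where
  "chi sA sB = min sA sB * (2 * max sA sB - min sA sB + 1) div 2"

definition gamma :: "nat \<Rightarrow> real \<Rightarrow> real" where
  "gamma j u = j * u / (1 - j * u)"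

text \<open>Floating-point summation of a (multi)set of terms in any order
  (any binary summation tree), each addition satisfying
  fl(x+y) = (x+y)(1+delta), |delta| <= u = 2^-p, with result in Fp p.\<close>
inductive fp_sum :: "nat \<Rightarrow> real multiset \<Rightarrow> real \<Rightarrow> bool" for p where
  single: "fp_sum p {#x#} x"
| add: "\<lbrakk>fp_sum p M1 a; fp_sum p M2 b; \<bar>\<delta>\<bar> \<le> 2 powr (- real p);
         (a + b) * (1 + \<delta>) \<in> Fp p\<rbrakk> \<Longrightarrow> fp_sum p (M1 + M2) ((a + b) * (1 + \<delta>))"

definition slice_terms :: "nat \<Rightarrow> nat \<Rightarrow> nat \<Rightarrow> nat \<Rightarrow>
    (nat \<Rightarrow> nat \<Rightarrow> real) \<Rightarrow> (nat \<Rightarrow> nat \<Rightarrow> real) \<Rightarrow> nat \<Rightarrow> nat \<Rightarrow> real multiset" where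
  "slice_terms t sA sB k A B i j =
     image_mset (\<lambda>(l, h). alpha k A i * beta k B j *
        (matmul k (sliceA t k A l) (sliceB t k B h) i j / 2 ^ ((l + h) * t)))
       (mset_set (slice_pairs sA sB))"

end

theory Submission
  imports Defs
begin


lemma trunc0_nonneg: "y \<ge> 0 \<Longrightarrow> 0 \<le> trunc0 y \<and> trunc0 y \<le> y \<and> y - trunc0 y < 1"
  unfolding trunc0_def by (simp; linarith)

lemma trunc0_nonpos: "y \<le> 0 \<Longrightarrow> y \<le> trunc0 y \<and> trunc0 y \<le> 0 \<and> trunc0 y - y < 1"
  unfolding trunc0_def
  apply (cases "y = 0", simp)
  apply simp
  by linarith

declare slc.simps[simp del]

definition dd :: "nat \<Rightarrow> real \<Rightarrow> nat \<Rightarrow> real" where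
  "dd t x l = slc t x l / 2 ^ (l * t)"

definition ee :: "nat \<Rightarrow> real \<Rightarrow> nat \<Rightarrow> real" where
  "ee t x s = x - (\<Sum>l\<in>{1..s}. dd t x l)"

lemma slc_Suc: "slc t x (Suc l) = trunc0 (2 ^ (Suc l * t) * ee t x l)"
  by (subst slc.simps) (simp add: ee_def dd_def atLeastLessThanSuc_atLeastAtMost)

lemma ee_0: "ee t x 0 = x" by (simp add: ee_def)

lemma ee_Suc: "ee t x (Suc l) = ee t x l - dd t x (Suc l)"
  by (simp add: ee_def)

lemma ee_Suc': "ee t x (Suc l) =
   (2 ^ (Suc l * t) * ee t x l - trunc0 (2 ^ (Suc l * t) * ee t x l)) / 2 ^ (Suc l * t)"
  by (simp add: ee_Suc dd_def slc_Suc diff_divide_distrib del: power_Suc)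

lemma ee_bound: "\<bar>x\<bar> < 1 \<Longrightarrow> \<bar>ee t x l\<bar> < 1 / 2 ^ (l * t)"
proof (cases l)
  case 0 then show ?thesis if "\<bar>x\<bar> < 1" using that by (simp add: ee_0)
next
  case (Suc l')
  define P :: real where "P = 2 ^ (Suc l' * t)"
  define y where "y = P * ee t x l'"
  have P: "P > 0" by (simp add: P_def)
  have "\<bar>y - trunc0 y\<bar> < 1"
    using trunc0_nonneg[of y] trunc0_nonpos[of y] by (cases "y \<ge> 0") auto
  then have "\<bar>(y - trunc0 y) / P\<bar> < 1 / P" using P by (simp add: abs_div divide_strict_right_mono)
  then show ?thesis using Suc ee_Suc'[of t x l'] by (simp add: P_def y_def del: power_Suc)
qed

lemma ee_pos: assumes "x \<ge> 0" shows "0 \<le> ee t x (Suc l) \<and> ee t x (Suc l) \<le> ee t x l \<and> 0 \<le> ee t x l"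
proof (induction l)
  case 0
  define P :: real where "P = 2 ^ (Suc 0 * t)"
  define y where "y = P * ee t x 0"
  have P: "P > 0" by (simp add: P_def)
  have y: "y \<ge> 0" using assms P by (simp add: y_def ee_0)
  have "ee t x (Suc 0) = (y - trunc0 y) / P" using ee_Suc'[of t x 0] by (simp add: P_def y_def)
  moreover have "(y - trunc0 y) / P \<le> y / P" "0 \<le> (y - trunc0 y) / P"
    using trunc0_nonneg[OF y] P by (auto simp: divide_right_mono)
  moreover have "y / P = ee t x 0" using P by (simp add: y_def)
  ultimately show ?case using assms by (simp add: ee_0)
next
  case (Suc l)
  define P :: real where "P = 2 ^ (Suc (Suc l) * t)"
  define y where "y = P * ee t x (Suc l)"
  have P: "P > 0" by (simp add: P_def)
  have y: "y \<ge> 0" using Suc P by (simp add: y_def)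
  have "ee t x (Suc (Suc l)) = (y - trunc0 y) / P" using ee_Suc'[of t x "Suc l"] by (simp add: P_def y_def del: power_Suc)
  moreover have "(y - trunc0 y) / P \<le> y / P" "0 \<le> (y - trunc0 y) / P"
    using trunc0_nonneg[OF y] P by (auto simp: divide_right_mono)
  moreover have "y / P = ee t x (Suc l)" using P by (simp add: y_def)
  ultimately show ?case using Suc by simp
qed

lemma ee_neg: assumes "x \<le> 0" shows "ee t x (Suc l) \<le> 0 \<and> ee t x l \<le> ee t x (Suc l) \<and> ee t x l \<le> 0"
proof (induction l)
  case 0
  define P :: real where "P = 2 ^ (Suc 0 * t)"
  define y where "y = P * ee t x 0"
  have P: "P > 0" by (simp add: P_def)
  have y: "y \<le> 0" using assms P by (simp add: y_def ee_0 mult_nonneg_nonpos)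
  have "ee t x (Suc 0) = (y - trunc0 y) / P" using ee_Suc'[of t x 0] by (simp add: P_def y_def)
  moreover have "y / P \<le> (y - trunc0 y) / P" "(y - trunc0 y) / P \<le> 0"
    using trunc0_nonpos[OF y] P by (auto simp: divide_right_mono divide_nonpos_pos)
  moreover have "y / P = ee t x 0" using P by (simp add: y_def)
  ultimately show ?case using assms by (simp add: ee_0)
next
  case (Suc l)
  define P :: real where "P = 2 ^ (Suc (Suc l) * t)"
  define y where "y = P * ee t x (Suc l)"
  have P: "P > 0" by (simp add: P_def)
  have y: "y \<le> 0" using Suc P by (simp add: y_def mult_nonneg_nonpos)
  have "ee t x (Suc (Suc l)) = (y - trunc0 y) / P" using ee_Suc'[of t x "Suc l"] by (simp add: P_def y_def del: power_Suc)
  moreover have "y / P \<le> (y - trunc0 y) / P" "(y - trunc0 y) / P \<le> 0"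
    using trunc0_nonpos[OF y] P by (auto simp: divide_right_mono divide_nonpos_pos)
  moreover have "y / P = ee t x (Suc l)" using P by (simp add: y_def)
  ultimately show ?case using Suc by simp
qed

lemma dd_abs: "\<bar>dd t x (Suc l)\<bar> = \<bar>ee t x l\<bar> - \<bar>ee t x (Suc l)\<bar>"
proof (cases "x \<ge> 0")
  case True then show ?thesis using ee_pos[OF True, of t l] ee_Suc[of t x l] by auto
next
  case False then show ?thesis using ee_neg[of x t l] ee_Suc[of t x l] by auto
qed

lemma sum_dd_abs: "a \<le> s \<Longrightarrow> (\<Sum>h\<in>{Suc a..s}. \<bar>dd t x h\<bar>) = \<bar>ee t x a\<bar> - \<bar>ee t x s\<bar>"
proof (induction s)
  case 0 then show ?case by simp
next
  case (Suc s)
  show ?case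
  proof (cases "a = Suc s")
    case True then show ?thesis by simp
  next
    case False
    then have "a \<le> s" using Suc.prems by simp
    then show ?thesis using Suc.IH by (simp add: sum.cl_ivl_Suc dd_abs)
  qed
qed

lemma sum_dd_le: "(\<Sum>l\<in>{1..s}. \<bar>dd t x l\<bar>) \<le> \<bar>x\<bar>"
  using sum_dd_abs[of 0 s t x] by (simp add: ee_0)

lemma dd_le: "\<bar>x\<bar> < 1 \<Longrightarrow> l \<ge> 1 \<Longrightarrow> \<bar>dd t x l\<bar> \<le> 1 / 2 ^ ((l - 1) * t)"
  using dd_abs[of t x "l - 1"] ee_bound[of x t "l - 1"] abs_ge_zero[of "ee t x l"]
  by (simp del: abs_ge_zero)

lemma tail_le: assumes "\<bar>x\<bar> < 1" "H \<ge> 1"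
  shows "\<bar>\<Sum>h\<in>{H..s}. dd t x h\<bar> \<le> 1 / 2 ^ ((H - 1) * t)"
proof (cases "H - 1 \<le> s")
  case True
  have "\<bar>\<Sum>h\<in>{H..s}. dd t x h\<bar> \<le> (\<Sum>h\<in>{H..s}. \<bar>dd t x h\<bar>)" by (rule sum_abs)
  also have "\<dots> = \<bar>ee t x (H - 1)\<bar> - \<bar>ee t x s\<bar>" using sum_dd_abs[OF True, of t x] assms by simp
  also have "\<dots> \<le> \<bar>ee t x (H - 1)\<bar>" by simp
  also have "\<dots> \<le> 1 / 2 ^ ((H - 1) * t)" using ee_bound[OF assms(1)] less_imp_le by blast
  finally show ?thesis .
next
  case False then show ?thesis by simp
qed



definition Qset :: "nat \<Rightarrow> nat \<Rightarrow> nat \<Rightarrow> (nat \<times> nat) set" where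
  "Qset a b M = {(l, h). 1 \<le> l \<and> l \<le> a \<and> 1 \<le> h \<and> h \<le> b \<and> M + 1 < l + h}"

lemma Qbound:
  assumes x: "\<bar>x\<bar> < 1" and y: "\<bar>y\<bar> < 1" and aM: "a \<le> M"
  shows "\<bar>\<Sum>(l, h)\<in>Qset a b M. dd t x l * dd t y h\<bar> \<le> real a / 2 ^ (M * t)"
proof -
  have Q: "Qset a b M = Sigma {1..a} (\<lambda>l. {M + 2 - l..b})"
    using aM by (auto simp: Qset_def)
  have "(\<Sum>(l, h)\<in>Qset a b M. dd t x l * dd t y h) = (\<Sum>l\<in>{1..a}. \<Sum>h\<in>{M + 2 - l..b}. dd t x l * dd t y h)"
    unfolding Q by (subst sum.Sigma) auto
  also have "\<dots> = (\<Sum>l\<in>{1..a}. dd t x l * (\<Sum>h\<in>{M + 2 - l..b}. dd t y h))"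
    by (simp add: sum_distrib_left)
  finally have eq: "(\<Sum>(l, h)\<in>Qset a b M. dd t x l * dd t y h) = (\<Sum>l\<in>{1..a}. dd t x l * (\<Sum>h\<in>{M + 2 - l..b}. dd t y h))" .
  have "\<bar>\<Sum>l\<in>{1..a}. dd t x l * (\<Sum>h\<in>{M + 2 - l..b}. dd t y h)\<bar>
      \<le> (\<Sum>l\<in>{1..a}. \<bar>dd t x l * (\<Sum>h\<in>{M + 2 - l..b}. dd t y h)\<bar>)" by (rule sum_abs)
  also have "\<dots> \<le> (\<Sum>l\<in>{1..a}. 1 / 2 ^ (M * t))"
  proof (rule sum_mono)
    fix l assume l: "l \<in> {1..a}"
    have t1: "\<bar>dd t x l\<bar> \<le> 1 / 2 ^ ((l - 1) * t)" using dd_le[OF x] l by auto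
    have t2: "\<bar>\<Sum>h\<in>{M + 2 - l..b}. dd t y h\<bar> \<le> 1 / 2 ^ ((M + 2 - l - 1) * t)"
      using tail_le[OF y, where H="M + 2 - l" and s=b and t=t] l aM by auto
    have "\<bar>dd t x l * (\<Sum>h\<in>{M + 2 - l..b}. dd t y h)\<bar> \<le> 1 / 2 ^ ((l - 1) * t) * (1 / 2 ^ ((M + 2 - l - 1) * t))"
      unfolding abs_mult by (rule mult_mono[OF t1 t2]) auto
    also have "\<dots> = 1 / 2 ^ ((l - 1) * t + (M + 2 - l - 1) * t)" by (simp add: power_add)
    also have "(l - 1) * t + (M + 2 - l - 1) * t = M * t" using l aM
      by (simp add: add_mult_distrib[symmetric])
    finally show "\<bar>dd t x l * (\<Sum>h\<in>{M + 2 - l..b}. dd t y h)\<bar> \<le> 1 / 2 ^ (M * t)" .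
  qed
  also have "\<dots> = real a / 2 ^ (M * t)" by simp
  finally show ?thesis using eq by simp
qed

lemma Qswap: "(\<Sum>(l, h)\<in>Qset a b M. dd t x l * dd t y h) = (\<Sum>(h, l)\<in>Qset b a M. dd t y h * dd t x l)"
  by (rule sum.reindex_bij_witness[of _ prod.swap prod.swap]) (auto simp: Qset_def)

lemma scalar_main:
  assumes x: "\<bar>x\<bar> < 1" and y: "\<bar>y\<bar> < 1" and sA: "sA \<ge> 1" and sB: "sB \<ge> 1"
  shows "\<bar>x * y - (\<Sum>(l, h)\<in>slice_pairs sA sB. dd t x l * dd t y h)\<bar>
    \<le> \<bar>y\<bar> / 2 ^ (sA * t) + \<bar>x\<bar> / 2 ^ (sB * t) + 1 / 2 ^ ((sA + sB) * t)
      + real (min sA sB) / 2 ^ (max sA sB * t)"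
proof -
  define M where "M = max sA sB"
  define X where "X = (\<Sum>l\<in>{1..sA}. dd t x l)"
  define Y where "Y = (\<Sum>h\<in>{1..sB}. dd t y h)"
  define ex where "ex = ee t x sA"
  define ey where "ey = ee t y sB"
  have xe: "x = X + ex" by (simp add: X_def ex_def ee_def)
  have ye: "y = Y + ey" by (simp add: Y_def ey_def ee_def)
  have R: "{1..sA} \<times> {1..sB} = slice_pairs sA sB \<union> Qset sA sB M"
    by (auto simp: slice_pairs_def Qset_def M_def)
  have disj: "slice_pairs sA sB \<inter> Qset sA sB M = {}"
    by (auto simp: slice_pairs_def Qset_def M_def)
  have fin: "finite (slice_pairs sA sB)" "finite (Qset sA sB M)"
    by (rule finite_subset[of _ "{1..sA} \<times> {1..sB}"]; auto simp: slice_pairs_def Qset_def)+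
  have "X * Y = (\<Sum>(l, h)\<in>{1..sA} \<times> {1..sB}. dd t x l * dd t y h)"
    unfolding X_def Y_def sum_product by (simp add: sum.cartesian_product)
  also have "\<dots> = (\<Sum>(l, h)\<in>slice_pairs sA sB. dd t x l * dd t y h) + (\<Sum>(l, h)\<in>Qset sA sB M. dd t x l * dd t y h)"
    unfolding R by (rule sum.union_disjoint[OF fin disj])
  finally have XY: "X * Y = (\<Sum>(l, h)\<in>slice_pairs sA sB. dd t x l * dd t y h) + (\<Sum>(l, h)\<in>Qset sA sB M. dd t x l * dd t y h)" .
  define SQ where "SQ = (\<Sum>(l, h)\<in>Qset sA sB M. dd t x l * dd t y h)"
  have diff: "x * y - (\<Sum>(l, h)\<in>slice_pairs sA sB. dd t x l * dd t y h) = SQ + ex * Y + X * ey + ex * ey"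
    using XY unfolding SQ_def xe ye by (simp add: algebra_simps)
  have SQ1: "\<bar>SQ\<bar> \<le> real sA / 2 ^ (M * t)" unfolding SQ_def by (rule Qbound[OF x y]) (simp add: M_def)
  have SQ2: "\<bar>SQ\<bar> \<le> real sB / 2 ^ (M * t)" unfolding SQ_def by (subst Qswap) (rule Qbound[OF y x], simp add: M_def)
  have SQ: "\<bar>SQ\<bar> \<le> real (min sA sB) / 2 ^ (max sA sB * t)"
    using SQ1 SQ2 unfolding M_def by (cases "sA \<le> sB") (auto simp: min_def)
  have Xb: "\<bar>X\<bar> \<le> \<bar>x\<bar>" unfolding X_def using sum_abs order_trans sum_dd_le by blast
  have Yb: "\<bar>Y\<bar> \<le> \<bar>y\<bar>" unfolding Y_def using sum_abs order_trans sum_dd_le by blast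
  have exb: "\<bar>ex\<bar> \<le> 1 / 2 ^ (sA * t)" unfolding ex_def using ee_bound[OF x] less_imp_le by blast
  have eyb: "\<bar>ey\<bar> \<le> 1 / 2 ^ (sB * t)" unfolding ey_def using ee_bound[OF y] less_imp_le by blast
  have 1: "\<bar>ex * Y\<bar> \<le> \<bar>y\<bar> / 2 ^ (sA * t)"
    using mult_mono[OF exb Yb] by (simp add: abs_mult)
  have 2: "\<bar>X * ey\<bar> \<le> \<bar>x\<bar> / 2 ^ (sB * t)"
    using mult_mono[OF Xb eyb] by (simp add: abs_mult)
  have 3: "\<bar>ex * ey\<bar> \<le> 1 / 2 ^ ((sA + sB) * t)"
    using mult_mono[OF exb eyb] by (simp add: abs_mult power_add add_mult_distrib)
  show ?thesis unfolding diff using SQ 1 2 3 by linarith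
qed



lemma gamma_mono: assumes "j \<le> j'" "real j' * u < 1" "u \<ge> 0" shows "gamma j u \<le> gamma j' u"
proof -
  have a: "real j * u \<le> real j' * u" using assms by (simp add: mult_right_mono)
  have "real j * u / (1 - real j * u) \<le> real j' * u / (1 - real j' * u)"
    using a assms(2) by (intro frac_le) (use assms in auto)
  then show ?thesis by (simp add: gamma_def)
qed

lemma gamma_nonneg: "real j * u < 1 \<Longrightarrow> u \<ge> 0 \<Longrightarrow> gamma j u \<ge> 0"
  by (simp add: gamma_def)

lemma gamma_step: assumes "real (Suc j) * u < 1" "u \<ge> 0"
  shows "gamma j u + u * (1 + gamma j u) \<le> gamma (Suc j) u"
proof -
  have j: "real j * u < 1" using assms by (smt (verit) mult_right_mono of_nat_Suc)
  have d1: "1 - real j * u > 0" using j by simp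
  have d2: "1 - real (Suc j) * u > 0" using assms by simp
  have "gamma j u + u * (1 + gamma j u) = (1 + u) / (1 - real j * u) - 1"
  proof -
    have "gamma j u + u * (1 + gamma j u) = (real j * u + u * (1 - real j * u) + u * (real j * u)) / (1 - real j * u)"
      using d1 by (simp add: gamma_def add_divide_distrib distrib_left)
    also have "\<dots> = (1 + u - (1 - real j * u)) / (1 - real j * u)" by (simp add: algebra_simps)
    also have "\<dots> = (1 + u) / (1 - real j * u) - (1 - real j * u) / (1 - real j * u)"
      by (rule diff_divide_distrib)
    also have "\<dots> = (1 + u) / (1 - real j * u) - 1" using d1 by simp
    finally show ?thesis .
  qed
  also have "\<dots> \<le> 1 / (1 - real (Suc j) * u) - 1"
  proof -
    have "(1 + u) * (1 - real (Suc j) * u) \<le> 1 - real j * u"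
      using assms(2) by (simp add: algebra_simps)
    then have "(1 + u) / (1 - real j * u) \<le> 1 / (1 - real (Suc j) * u)"
      using d1 d2 by (simp add: divide_simps)
    then show ?thesis by simp
  qed
  also have "\<dots> = gamma (Suc j) u" using d2 by (simp add: gamma_def field_simps)
  finally show ?thesis .
qed

lemma sum_mset_abs_nonneg: "0 \<le> sum_mset (image_mset abs (M :: real multiset))"
  by (induction M) auto

lemma sum_mset_abs_le: "\<bar>sum_mset (M :: real multiset)\<bar> \<le> sum_mset (image_mset abs M)"
  by (induction M) (auto intro: order_trans[OF abs_triangle_ineq])

lemma fp_sum_size: "fp_sum p M s \<Longrightarrow> size M \<ge> 1"
  by (induction rule: fp_sum.induct) auto

lemma fp_sum_err:
  assumes "fp_sum p M s"
  shows "real (size M - 1) * 2 powr (- real p) < 1 \<Longrightarrow>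
    \<bar>s - sum_mset M\<bar> \<le> gamma (size M - 1) (2 powr (- real p)) * sum_mset (image_mset abs M)"
  using assms
proof (induction rule: fp_sum.induct)
  case (single x) then show ?case by (simp add: gamma_def)
next
  case (add M1 a M2 b \<delta>)
  define u :: real where "u = 2 powr (- real p)"
  have u0: "u \<ge> 0" by (simp add: u_def)
  define N where "N = size M1 + size M2"
  have n1: "size M1 \<ge> 1" using fp_sum_size[OF add.hyps(1)] .
  have n2: "size M2 \<ge> 1" using fp_sum_size[OF add.hyps(2)] .
  have hN: "real (N - 1) * u < 1" using add.prems by (simp add: N_def u_def)
  define g where "g = gamma (N - 2) u"
  have N2: "N - 1 = Suc (N - 2)" using n1 n2 by (simp add: N_def)
  have hN2: "real (N - 2) * u < 1" using hN u0 by (smt (verit) N2 mult_right_mono of_nat_Suc)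
  have lt1: "real (size M1 - 1) * u < 1"
    using hN u0 by (smt (verit) N_def diff_le_mono le_add1 mult_right_mono of_nat_le_iff)
  have lt2: "real (size M2 - 1) * u < 1"
    using hN u0 by (smt (verit) N_def diff_le_mono le_add2 mult_right_mono of_nat_le_iff)
  have g1: "gamma (size M1 - 1) u \<le> g" unfolding g_def
    by (rule gamma_mono[OF _ hN2 u0]) (use n1 n2 in \<open>simp add: N_def\<close>)
  have g2: "gamma (size M2 - 1) u \<le> g" unfolding g_def
    by (rule gamma_mono[OF _ hN2 u0]) (use n1 n2 in \<open>simp add: N_def\<close>)
  define S1 where "S1 = sum_mset (image_mset abs M1)"
  define S2 where "S2 = sum_mset (image_mset abs M2)"
  have S10: "S1 \<ge> 0" "S2 \<ge> 0" unfolding S1_def S2_def by (auto intro: sum_mset_abs_nonneg)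
  have e1: "\<bar>a - sum_mset M1\<bar> \<le> g * S1"
    using add.IH(1) lt1 g1 S10 unfolding S1_def u_def
    by (smt (verit) mult_right_mono)
  have e2: "\<bar>b - sum_mset M2\<bar> \<le> g * S2"
    using add.IH(2) lt2 g2 S10 unfolding S2_def u_def
    by (smt (verit) mult_right_mono)
  have sabs1: "\<bar>sum_mset M1\<bar> \<le> S1" unfolding S1_def by (rule sum_mset_abs_le)
  have sabs2: "\<bar>sum_mset M2\<bar> \<le> S2" unfolding S2_def by (rule sum_mset_abs_le)
  define T where "T = S1 + S2"
  have T0: "T \<ge> 0" using S10 by (simp add: T_def)
  have eab: "\<bar>a + b - (sum_mset M1 + sum_mset M2)\<bar> \<le> g * T"
    using e1 e2 abs_triangle_ineq[of "a - sum_mset M1" "b - sum_mset M2"] unfolding T_def distrib_left by linarith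
  have ab: "\<bar>a + b\<bar> \<le> T + g * T" using eab sabs1 sabs2 unfolding T_def by linarith
  have dab: "\<bar>\<delta> * (a + b)\<bar> \<le> u * (T + g * T)"
    unfolding abs_mult using mult_mono[OF add.hyps(3)[folded u_def] ab] u0 by simp
  have "\<bar>(a + b) * (1 + \<delta>) - sum_mset (M1 + M2)\<bar>
      = \<bar>(a + b - (sum_mset M1 + sum_mset M2)) + \<delta> * (a + b)\<bar>" by (simp add: algebra_simps)
  also have "\<dots> \<le> g * T + u * (T + g * T)" using eab dab by linarith
  also have "\<dots> = (g + u * (1 + g)) * T" by (simp add: algebra_simps)
  also have "\<dots> \<le> gamma (Suc (N - 2)) u * T"
    unfolding g_def by (rule mult_right_mono[OF gamma_step T0]) (use hN N2 u0 in auto)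
  also have "\<dots> = gamma (size (M1 + M2) - 1) (2 powr (- real p)) * sum_mset (image_mset abs (M1 + M2))"
    using N2 by (simp add: N_def u_def T_def S1_def S2_def)
  finally show ?case .
qed


lemma pow2_above_bounds: assumes y: "y > 0"
  shows "y < pow2_above y \<and> pow2_above y \<le> 2 * y"
proof -
  define f where "f = \<lfloor>log 2 y\<rfloor>"
  have ly: "2 powr (log 2 y) = y" using y by simp
  have lo: "2 powr real_of_int f \<le> y"
    using powr_mono[of "real_of_int f" "log 2 y" 2] ly by (simp add: f_def)
  have hi: "y < 2 powr real_of_int (f + 1)"
    using powr_less_mono[of "log 2 y" "real_of_int (f + 1)" 2] ly by (simp add: f_def)
  have L: "pow2_above y = 2 powr real_of_int (f + 1)"
    unfolding pow2_above_def
  proof (rule Least_equality)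
    show "y < 2 powr real_of_int (f + 1) \<and> (\<exists>e::int. 2 powr real_of_int (f + 1) = 2 powr real_of_int e)"
      using hi by blast
  next
    fix z assume "y < z \<and> (\<exists>e::int. z = 2 powr real_of_int e)"
    then obtain e :: int where z: "z = 2 powr real_of_int e" "y < z" by blast
    then have "2 powr real_of_int f < 2 powr real_of_int e" using lo by linarith
    then have "f < e" by simp
    then have "real_of_int (f + 1) \<le> real_of_int e" by simp
    then show "2 powr real_of_int (f + 1) \<le> z" unfolding z(1) by (rule powr_mono) simp
  qed
  have "2 powr real_of_int (f + 1) = 2 * 2 powr real_of_int f" by (simp add: powr_add)
  then show ?thesis using L hi lo by simp
qed

lemma sum_tri: fixes a b :: nat shows "a \<le> b \<Longrightarrow> 2 * (\<Sum>l\<in>{1..a}. b + 1 - l) = a * (2 * b - a + 1)"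
proof (induction a)
  case 0 then show ?case by simp
next
  case (Suc a)
  then have IH: "2 * (\<Sum>l\<in>{1..a}. b + 1 - l) = a * (2 * b - a + 1)" by simp
  have "2 * (\<Sum>l\<in>{1..Suc a}. b + 1 - l) = a * (2 * b - a + 1) + 2 * (b - a)"
    using IH by (simp add: sum.cl_ivl_Suc)
  also have "\<dots> = Suc a * (2 * b - Suc a + 1)"
  proof -
    obtain c where c: "b = Suc a + c" using Suc.prems le_Suc_ex by blast
    show ?thesis unfolding c by (simp add: algebra_simps)
  qed
  finally show ?case .
qed

lemma card_pairs_le: assumes "sA \<le> sB" shows "card (slice_pairs sA sB) = chi sA sB"
proof -
  have S: "slice_pairs sA sB = Sigma {1..sA} (\<lambda>l. {1..sB + 1 - l})"
    using assms by (auto simp: slice_pairs_def)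
  have "card (slice_pairs sA sB) = (\<Sum>l\<in>{1..sA}. sB + 1 - l)"
    unfolding S by (subst card_SigmaI) auto
  moreover have "chi sA sB = sA * (2 * sB - sA + 1) div 2"
    using assms by (simp add: chi_def min_def max_def)
  ultimately show ?thesis using sum_tri[OF assms] by simp
qed

lemma card_pairs: "card (slice_pairs sA sB) = chi sA sB"
proof (cases "sA \<le> sB")
  case True then show ?thesis by (rule card_pairs_le)
next
  case False
  have "slice_pairs sA sB = prod.swap ` slice_pairs sB sA"
    by (auto simp: slice_pairs_def image_iff max.commute)
  then have "card (slice_pairs sA sB) = card (slice_pairs sB sA)"
    by (simp add: card_image)
  also have "\<dots> = chi sB sA" using False by (intro card_pairs_le) simp
  also have "\<dots> = chi sA sB" by (simp add: chi_def min.commute max.commute)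
  finally show ?thesis .
qed

lemma scale_bound:
  fixes f :: "nat \<Rightarrow> real"
  assumes k: "k \<ge> 1" and nz: "\<And>q. q < k \<Longrightarrow> f q \<noteq> 0"
    and kap: "2 * (Max {\<bar>f q\<bar> | q. q < k} / Min {\<bar>f q\<bar> | q. q < k}) \<le> kap"
    and q: "q < k"
  shows "\<bar>f q\<bar> < pow2_above (Max {\<bar>f q\<bar> | q. q < k})
       \<and> pow2_above (Max {\<bar>f q\<bar> | q. q < k}) \<le> kap * \<bar>f q\<bar>"
proof -
  define S where "S = {\<bar>f q\<bar> | q. q < k}"
  have S: "S = (\<lambda>q. \<bar>f q\<bar>) ` {..<k}" by (auto simp: S_def)
  have fin: "finite S" and ne: "S \<noteq> {}" using k by (auto simp: S lessThan_empty_iff)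
  have inS: "\<bar>f q\<bar> \<in> S" using q by (auto simp: S)
  define Mx where "Mx = Max S"
  define Mn where "Mn = Min S"
  have Mn_pos: "Mn > 0" unfolding Mn_def using Min_in[OF fin ne] nz by (auto simp: S)
  have le1: "\<bar>f q\<bar> \<le> Mx" unfolding Mx_def using Max_ge[OF fin inS] .
  have le2: "Mn \<le> \<bar>f q\<bar>" unfolding Mn_def using Min_le[OF fin inS] .
  have Mx_pos: "Mx > 0" using le1 le2 Mn_pos by linarith
  have pb: "Mx < pow2_above Mx \<and> pow2_above Mx \<le> 2 * Mx" by (rule pow2_above_bounds[OF Mx_pos])
  have kap': "2 * (Mx / Mn) \<le> kap" using kap by (simp add: Mx_def Mn_def S_def)
  have "2 * Mx = 2 * (Mx / Mn) * Mn" using Mn_pos by simp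
  also have "\<dots> \<le> kap * Mn" using mult_right_mono[OF kap', of Mn] Mn_pos by simp
  also have "\<dots> \<le> kap * \<bar>f q\<bar>"
    using le2 kap' Mn_pos Mx_pos by (intro mult_left_mono) (auto intro: order_trans[rotated])
  finally show ?thesis using pb le1 by (simp add: Mx_def S_def)
qed


lemma slice_terms_facts:
  "size (slice_terms t sA sB k A B i j) = card (slice_pairs sA sB)"
  "sum_mset (slice_terms t sA sB k A B i j) = (\<Sum>(l, h)\<in>slice_pairs sA sB. alpha k A i * beta k B j *
        (matmul k (sliceA t k A l) (sliceB t k B h) i j / 2 ^ ((l + h) * t)))"
  "sum_mset (image_mset abs (slice_terms t sA sB k A B i j)) = (\<Sum>(l, h)\<in>slice_pairs sA sB. \<bar>alpha k A i * beta k B j *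
        (matmul k (sliceA t k A l) (sliceB t k B h) i j / 2 ^ ((l + h) * t))\<bar>)"
  unfolding slice_terms_def
  by (simp_all add: sum_unfold_sum_mset multiset.map_comp o_def case_prod_unfold)

theorem mainTheorem2:
  fixes p t sA sB m k n :: nat
    and A B Chat :: "nat \<Rightarrow> nat \<Rightarrow> real"
  defines "u \<equiv> 2 powr (- real p)"
    and "psi \<equiv> chi sA sB"
    and "kA \<equiv> kappaA m k A" and "kB \<equiv> kappaB k n B"
    and "zeta \<equiv> kappaA m k A / 2 ^ (sA * t) + kappaB k n B / 2 ^ (sB * t)
              + kappaA m k A * kappaB k n B / 2 ^ ((sA + sB) * t)"
  assumes "p \<ge> 2" and "t \<ge> 1" and "sA \<ge> 1" and "sB \<ge> 1"
    and "m \<ge> 1" and "k \<ge> 1" and "n \<ge> 1"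
    and A_fp: "\<And>i q. i < m \<Longrightarrow> q < k \<Longrightarrow> A i q \<in> Fp p \<and> A i q \<noteq> 0"
    and B_fp: "\<And>q j. q < k \<Longrightarrow> j < n \<Longrightarrow> B q j \<in> Fp p \<and> B q j \<noteq> 0"
    and exact_conv: "\<And>l h i j. (l, h) \<in> slice_pairs sA sB \<Longrightarrow> i < m \<Longrightarrow> j < n \<Longrightarrow>
          matmul k (sliceA t k A l) (sliceB t k B h) i j \<in> Fp p"
    and computed: "\<And>i j. i < m \<Longrightarrow> j < n \<Longrightarrow> fp_sum p (slice_terms t sA sB k A B i j) (Chat i j)"
    and "real psi * u < 1"
  shows "\<forall>i<m. \<forall>j<n.
     \<bar>matmul k A B i j - Chat i j\<bar> \<le>
       (if sA \<le> sB then
          zeta + real sA * kA * kB / 2 ^ (sB * t)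
            + gamma psi u * (1 + zeta + real sA * kA * kB / 2 ^ (sB * t))
        else
          zeta + real sB * kA * kB / 2 ^ (sA * t)
            + gamma psi u * (1 + zeta + real sB * kA * kB / 2 ^ (sA * t)))
       * matmul k (\<lambda>i q. \<bar>A i q\<bar>) (\<lambda>q j. \<bar>B q j\<bar>) i j"
proof (intro allI impI)
  fix i j assume i: "i < m" and j: "j < n"
  note k1 = \<open>k \<ge> 1\<close>
  define P where "P = slice_pairs sA sB"
  define \<alpha> where "\<alpha> = alpha k A i"
  define \<beta> where "\<beta> = beta k B j"
  define x where "x = (\<lambda>q. A i q / \<alpha>)"
  define y where "y = (\<lambda>q. B q j / \<beta>)"
  have kapA: "2 * (Max {\<bar>A i q\<bar> | q. q < k} / Min {\<bar>A i q\<bar> | q. q < k}) \<le> kA"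
  proof -
    let ?r = "\<lambda>i. Max {\<bar>A i q\<bar> | q. q < k} / Min {\<bar>A i q\<bar> | q. q < k}"
    have eq: "{Max {\<bar>A i' q\<bar> | q. q < k} / Min {\<bar>A i' q\<bar> | q. q < k} | i'. i' < m} = ?r ` {..<m}" by auto
    have "?r i \<le> Max (?r ` {..<m})" using i by (intro Max_ge) auto
    then show ?thesis unfolding kA_def kappaA_def eq by simp
  qed
  have kapB: "2 * (Max {\<bar>B q j\<bar> | q. q < k} / Min {\<bar>B q j\<bar> | q. q < k}) \<le> kB"
  proof -
    let ?r = "\<lambda>j. Max {\<bar>B q j\<bar> | q. q < k} / Min {\<bar>B q j\<bar> | q. q < k}"
    have eq: "{Max {\<bar>B q j'\<bar> | q. q < k} / Min {\<bar>B q j'\<bar> | q. q < k} | j'. j' < n} = ?r ` {..<n}" by auto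
    have "?r j \<le> Max (?r ` {..<n})" using j by (intro Max_ge) auto
    then show ?thesis unfolding kB_def kappaB_def eq by simp
  qed
  have sbA: "\<bar>A i q\<bar> < \<alpha> \<and> \<alpha> \<le> kA * \<bar>A i q\<bar>" if q: "q < k" for q
    using scale_bound[of k "A i" kA q, OF k1 _ kapA q] A_fp[OF i] unfolding \<alpha>_def alpha_def by blast
  have sbB: "\<bar>B q j\<bar> < \<beta> \<and> \<beta> \<le> kB * \<bar>B q j\<bar>" if q: "q < k" for q
    using scale_bound[of k "\<lambda>q. B q j" kB q, OF k1 _ kapB q] B_fp[OF _ j] unfolding \<beta>_def beta_def by blast
  have \<alpha>0: "\<alpha> > 0" using sbA[of 0] k1 by linarith
  have \<beta>0: "\<beta> > 0" using sbB[of 0] k1 by linarith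
  have x1: "\<bar>x q\<bar> < 1" if "q < k" for q using sbA[OF that] \<alpha>0 by (simp add: x_def abs_div)
  have y1: "\<bar>y q\<bar> < 1" if "q < k" for q using sbB[OF that] \<beta>0 by (simp add: y_def abs_div)
  have Ax: "A i q = \<alpha> * x q" for q using \<alpha>0 by (simp add: x_def)
  have By: "B q j = \<beta> * y q" for q using \<beta>0 by (simp add: y_def)
  define DD where "DD = (\<lambda>q. \<Sum>(l, h)\<in>P. dd t (x q) l * dd t (y q) h)"
  define Z where "Z = zeta + real (min sA sB) * kA * kB / 2 ^ (max sA sB * t)"
  define T where "T = matmul k (\<lambda>i q. \<bar>A i q\<bar>) (\<lambda>q j. \<bar>B q j\<bar>) i j"
  define \<tau> where "\<tau> = (\<lambda>(l, h). alpha k A i * beta k B j *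
        (matmul k (sliceA t k A l) (sliceB t k B h) i j / 2 ^ ((l + h) * t)))"
  have \<tau>eq: "\<tau> lh = \<alpha> * \<beta> * (\<Sum>q<k. dd t (x q) (fst lh) * dd t (y q) (snd lh))" for lh
  proof -
    obtain l h where lh: "lh = (l, h)" by force
    have "matmul k (sliceA t k A l) (sliceB t k B h) i j / 2 ^ ((l + h) * t)
        = (\<Sum>q<k. slc t (x q) l * slc t (y q) h / (2 ^ (l * t) * 2 ^ (h * t)))"
      unfolding matmul_def sliceA_def sliceB_def sum_divide_distrib
      by (simp add: x_def y_def \<alpha>_def \<beta>_def power_add add_mult_distrib)
    also have "\<dots> = (\<Sum>q<k. dd t (x q) l * dd t (y q) h)" by (simp add: dd_def)
    finally have "matmul k (sliceA t k A l) (sliceB t k B h) i j / 2 ^ ((l + h) * t) = (\<Sum>q<k. dd t (x q) l * dd t (y q) h)" .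
    then show ?thesis unfolding \<tau>_def lh \<alpha>_def \<beta>_def by (simp only: prod.case fst_conv snd_conv)
  qed
  have fin: "finite P" unfolding P_def
    by (rule finite_subset[of _ "{1..sA} \<times> {1..sB}"]) (auto simp: slice_pairs_def)
  have Csum: "(\<Sum>lh\<in>P. \<tau> lh) = (\<Sum>q<k. \<alpha> * \<beta> * DD q)"
    unfolding \<tau>eq DD_def by (simp add: sum_distrib_left case_prod_unfold sum.swap[of _ P])
  have perq: "\<bar>A i q * B q j - \<alpha> * \<beta> * DD q\<bar> \<le> Z * (\<bar>A i q\<bar> * \<bar>B q j\<bar>)" if q: "q < k" for q
  proof -
    define a where "a = \<bar>A i q\<bar>"
    define b where "b = \<bar>B q j\<bar>"
    define E1 :: real where "E1 = 2 ^ (sA * t)"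
    define E2 :: real where "E2 = 2 ^ (sB * t)"
    define E3 :: real where "E3 = 2 ^ ((sA + sB) * t)"
    define E4 :: real where "E4 = 2 ^ (max sA sB * t)"
    define mn where "mn = real (min sA sB)"
    have E: "E1 > 0" "E2 > 0" "E3 > 0" "E4 > 0" "mn \<ge> 0" by (simp_all add: E1_def E2_def E3_def E4_def mn_def)
    have a0: "a \<ge> 0" and b0: "b \<ge> 0" by (simp_all add: a_def b_def)
    have ax: "\<alpha> * \<bar>x q\<bar> = a" using Ax[of q] \<alpha>0 by (simp add: a_def abs_mult)
    have by': "\<beta> * \<bar>y q\<bar> = b" using By[of q] \<beta>0 by (simp add: b_def abs_mult)
    have al: "\<alpha> \<le> kA * a" using sbA[OF q] by (simp add: a_def)
    have bl: "\<beta> \<le> kB * b" using sbB[OF q] by (simp add: b_def)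
    have sc: "\<bar>x q * y q - DD q\<bar> \<le> \<bar>y q\<bar> / E1 + \<bar>x q\<bar> / E2 + 1 / E3 + mn / E4"
      unfolding DD_def P_def E1_def E2_def E3_def E4_def mn_def
      by (rule scalar_main[OF x1[OF q] y1[OF q] \<open>sA \<ge> 1\<close> \<open>sB \<ge> 1\<close>])
    have "\<bar>A i q * B q j - \<alpha> * \<beta> * DD q\<bar> = \<alpha> * \<beta> * \<bar>x q * y q - DD q\<bar>"
    proof -
      have "A i q * B q j - \<alpha> * \<beta> * DD q = (\<alpha> * \<beta>) * (x q * y q - DD q)"
        by (simp add: Ax By algebra_simps)
      then show ?thesis using \<alpha>0 \<beta>0 by (simp add: abs_mult)
    qed
    also have "\<dots> \<le> \<alpha> * \<beta> * (\<bar>y q\<bar> / E1 + \<bar>x q\<bar> / E2 + 1 / E3 + mn / E4)"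
      using sc \<alpha>0 \<beta>0 by (simp add: mult_left_mono)
    also have "\<dots> = \<alpha> * b / E1 + a * \<beta> / E2 + \<alpha> * \<beta> / E3 + mn * (\<alpha> * \<beta>) / E4"
      using ax by' by (simp add: algebra_simps add_divide_distrib)
    also have "\<dots> \<le> kA * a * b / E1 + a * (kB * b) / E2 + (kA * a) * (kB * b) / E3 + mn * ((kA * a) * (kB * b)) / E4"
    proof -
      have k1: "\<alpha> * b \<le> kA * a * b" using mult_right_mono[OF al b0] .
      have k2: "a * \<beta> \<le> a * (kB * b)" using mult_left_mono[OF bl a0] .
      have k3: "\<alpha> * \<beta> \<le> (kA * a) * (kB * b)"
        using mult_mono[OF al bl] \<alpha>0 \<beta>0 al by linarith
      have k4: "mn * (\<alpha> * \<beta>) \<le> mn * ((kA * a) * (kB * b))" using mult_left_mono[OF k3 E(5)] .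
      show ?thesis using divide_right_mono[OF k1, of E1] divide_right_mono[OF k2, of E2]
          divide_right_mono[OF k3, of E3] divide_right_mono[OF k4, of E4] E by linarith
    qed
    also have "\<dots> = Z * (a * b)"
      by (simp add: Z_def zeta_def kA_def kB_def E1_def E2_def E3_def E4_def mn_def algebra_simps add_divide_distrib)
    finally show ?thesis by (simp add: a_def b_def)
  qed
  have trunc_err: "\<bar>matmul k A B i j - (\<Sum>lh\<in>P. \<tau> lh)\<bar> \<le> Z * T"
  proof -
    have "matmul k A B i j - (\<Sum>lh\<in>P. \<tau> lh) = (\<Sum>q<k. A i q * B q j - \<alpha> * \<beta> * DD q)"
      unfolding Csum matmul_def by (simp add: sum_subtractf)
    also have "\<bar>\<dots>\<bar> \<le> (\<Sum>q<k. \<bar>A i q * B q j - \<alpha> * \<beta> * DD q\<bar>)" by (rule sum_abs)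
    also have "\<dots> \<le> (\<Sum>q<k. Z * (\<bar>A i q\<bar> * \<bar>B q j\<bar>))" by (rule sum_mono) (use perq in auto)
    also have "\<dots> = Z * T" by (simp add: T_def matmul_def sum_distrib_left)
    finally show ?thesis .
  qed
  have abs_terms: "(\<Sum>lh\<in>P. \<bar>\<tau> lh\<bar>) \<le> T"
  proof -
    have "(\<Sum>lh\<in>P. \<bar>\<tau> lh\<bar>) \<le> (\<Sum>lh\<in>P. \<alpha> * \<beta> * (\<Sum>q<k. \<bar>dd t (x q) (fst lh)\<bar> * \<bar>dd t (y q) (snd lh)\<bar>))"
    proof (rule sum_mono)
      fix lh assume "lh \<in> P"
      have "\<bar>\<tau> lh\<bar> = \<alpha> * \<beta> * \<bar>\<Sum>q<k. dd t (x q) (fst lh) * dd t (y q) (snd lh)\<bar>"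
        using \<alpha>0 \<beta>0 by (simp add: \<tau>eq abs_mult)
      also have "\<dots> \<le> \<alpha> * \<beta> * (\<Sum>q<k. \<bar>dd t (x q) (fst lh)\<bar> * \<bar>dd t (y q) (snd lh)\<bar>)"
        using \<alpha>0 \<beta>0 sum_abs[of "\<lambda>q. dd t (x q) (fst lh) * dd t (y q) (snd lh)" "{..<k}"]
        by (intro mult_left_mono) (auto simp: abs_mult)
      finally show "\<bar>\<tau> lh\<bar> \<le> \<alpha> * \<beta> * (\<Sum>q<k. \<bar>dd t (x q) (fst lh)\<bar> * \<bar>dd t (y q) (snd lh)\<bar>)" .
    qed
    also have "\<dots> = \<alpha> * \<beta> * (\<Sum>q<k. \<Sum>lh\<in>P. \<bar>dd t (x q) (fst lh)\<bar> * \<bar>dd t (y q) (snd lh)\<bar>)"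
      by (simp add: sum_distrib_left sum.swap[of _ P])
    also have "\<dots> \<le> \<alpha> * \<beta> * (\<Sum>q<k. \<bar>x q\<bar> * \<bar>y q\<bar>)"
    proof (intro mult_left_mono sum_mono)
      fix q assume "q \<in> {..<k}"
      have sub: "P \<subseteq> {1..sA} \<times> {1..sB}" by (auto simp: P_def slice_pairs_def)
      have "(\<Sum>lh\<in>P. \<bar>dd t (x q) (fst lh)\<bar> * \<bar>dd t (y q) (snd lh)\<bar>)
          \<le> (\<Sum>lh\<in>{1..sA} \<times> {1..sB}. \<bar>dd t (x q) (fst lh)\<bar> * \<bar>dd t (y q) (snd lh)\<bar>)"
        by (rule sum_mono2[OF _ sub]) auto
      also have "\<dots> = (\<Sum>l\<in>{1..sA}. \<bar>dd t (x q) l\<bar>) * (\<Sum>h\<in>{1..sB}. \<bar>dd t (y q) h\<bar>)"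
        by (simp add: sum_product sum.cartesian_product case_prod_unfold)
      also have "\<dots> \<le> \<bar>x q\<bar> * \<bar>y q\<bar>"
        by (rule mult_mono[OF sum_dd_le sum_dd_le]) (auto intro: sum_nonneg)
      finally show "(\<Sum>lh\<in>P. \<bar>dd t (x q) (fst lh)\<bar> * \<bar>dd t (y q) (snd lh)\<bar>) \<le> \<bar>x q\<bar> * \<bar>y q\<bar>" .
    qed (use \<alpha>0 \<beta>0 in auto)
    also have "\<dots> = T"
      unfolding T_def matmul_def sum_distrib_left
      by (rule sum.cong) (use \<alpha>0 \<beta>0 in \<open>auto simp: Ax By abs_mult algebra_simps\<close>)
    finally show ?thesis .
  qed
  have u0: "u \<ge> 0" by (simp add: u_def)
  have psiu: "real psi * u < 1" by fact
  have size_eq: "size (slice_terms t sA sB k A B i j) = psi"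
    using slice_terms_facts(1) card_pairs by (simp add: psi_def)
  have g0: "gamma psi u \<ge> 0" by (rule gamma_nonneg[OF psiu u0])
  have round_err: "\<bar>Chat i j - (\<Sum>lh\<in>P. \<tau> lh)\<bar> \<le> gamma psi u * T"
  proof -
    have lt: "real (psi - 1) * u < 1" using psiu u0
      by (smt (verit) diff_le_self mult_right_mono of_nat_le_iff)
    have s1: "sum_mset (slice_terms t sA sB k A B i j) = (\<Sum>lh\<in>P. \<tau> lh)"
      unfolding slice_terms_facts(2) P_def \<tau>_def by (simp add: case_prod_unfold)
    have s2: "sum_mset (image_mset abs (slice_terms t sA sB k A B i j)) = (\<Sum>lh\<in>P. \<bar>\<tau> lh\<bar>)"
      unfolding slice_terms_facts(3) P_def \<tau>_def by (simp add: case_prod_unfold)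
    have "\<bar>Chat i j - (\<Sum>lh\<in>P. \<tau> lh)\<bar> \<le> gamma (psi - 1) u * (\<Sum>lh\<in>P. \<bar>\<tau> lh\<bar>)"
      using fp_sum_err[OF computed[OF i j]] lt unfolding size_eq s1 s2 u_def by simp
    also have "\<dots> \<le> gamma psi u * T"
      by (rule mult_mono[OF gamma_mono[OF _ psiu u0] abs_terms g0]) (auto intro: sum_nonneg)
    finally show ?thesis .
  qed
  have T0: "T \<ge> 0" unfolding T_def matmul_def by (auto intro: sum_nonneg)
  have kA0: "kA \<ge> 0"
  proof (rule ccontr)
    assume "\<not> kA \<ge> 0"
    then have "kA * \<bar>A i 0\<bar> \<le> 0" by (simp add: mult_nonpos_nonneg)
    then show False using sbA[of 0] k1 \<alpha>0 by linarith
  qed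
  have kB0: "kB \<ge> 0"
  proof (rule ccontr)
    assume "\<not> kB \<ge> 0"
    then have "kB * \<bar>B 0 j\<bar> \<le> 0" by (simp add: mult_nonpos_nonneg)
    then show False using sbB[of 0] k1 \<beta>0 by linarith
  qed
  have Z0: "Z \<ge> 0" unfolding Z_def zeta_def using kA0 kB0 unfolding kA_def kB_def
    by (intro add_nonneg_nonneg divide_nonneg_nonneg mult_nonneg_nonneg) auto
  have main: "\<bar>matmul k A B i j - Chat i j\<bar> \<le> (Z + gamma psi u * (1 + Z)) * T"
  proof -
    have "\<bar>matmul k A B i j - Chat i j\<bar> \<le> Z * T + gamma psi u * T"
      using trunc_err round_err by linarith
    also have "\<dots> \<le> Z * T + gamma psi u * (1 + Z) * T"
      using g0 Z0 T0 by (simp add: algebra_simps)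
    finally show ?thesis by (simp add: algebra_simps)
  qed
  show "\<bar>matmul k A B i j - Chat i j\<bar> \<le>
       (if sA \<le> sB then
          zeta + real sA * kA * kB / 2 ^ (sB * t)
            + gamma psi u * (1 + zeta + real sA * kA * kB / 2 ^ (sB * t))
        else
          zeta + real sB * kA * kB / 2 ^ (sA * t)
            + gamma psi u * (1 + zeta + real sB * kA * kB / 2 ^ (sA * t)))
       * matmul k (\<lambda>i q. \<bar>A i q\<bar>) (\<lambda>q j. \<bar>B q j\<bar>) i j"
    using main unfolding T_def Z_def by (cases "sA \<le> sB") (auto simp: min_def max_def add.assoc)
qed

end
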